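(* The generating function of $(c(n))_{n\ge0}$ is \[ \sum_{n\ge 0}c(n)x^n=\frac{1}{1-x}+\sum_{i\ge 1}\frac{x^{2^{i-1}+1}(1-x^{2^i-1})}{(1-x)(1-x^{2^{i+1}})}, \] and the generating function of $(h(n))_{n\ge 0}$ is \[ \sum_{n\ge 0}h(n)x^n=\sum_{i\ge 1}\frac{x^{2^{i-1}+1}(1-x^{2^i-1})}{(1-x)(1-x^{2^{i+1}})}. \]
   Context: For $i\in\mathbb{N}$ and $n\in\mathbb{N}_0$ let $d_i(n)=2^{i-1}-\left|(n\bmod 2^i)-2^{i-1}\right|$, and let $c(n)$ be the number of distinct values in the set $\{d_i(n): i\in\mathbb{N}\}$. For $k\ge0$ and $0\le m<2^k$ let $\beta_k(m)\in\{0,1\}^k$ be the point whose $j$-th coordinate is the binary digit of $m$ of weight $2^{k-j}$. For $n\ge2$ with $k=\lceil\log_2 n\rceil$, a pair $(n_0,n_1)$ of integers with $n=n_0+n_1$, $n_0\ge n_1\ge1$ is a hypercubic bipartition (HCBP) of $n$ if for some $i\in\{1,\dots,k\}$ the hyperplane $x_i=1/2$ splits $\beta_k(0),\dots,\beta_k(n-1)$ into $n_0$ points on one side and $n_1$ on the other. For $n\ge2$, $h(n)$ is the number of HCBPs of $n$; $h(0)=h(1)=0$. *)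

theory Defs
  imports Complex_Main "HOL-Computational_Algebra.Formal_Power_Series"
begin

definition dd :: "nat \<Rightarrow> nat \<Rightarrow> int" where
  "dd i n = 2^(i-1) - \<bar>int (n mod 2^i) - 2^(i-1)\<bar>"

definition cc :: "nat \<Rightarrow> nat" where
  "cc n = card {dd i n | i. i \<ge> 1}"

definition beta :: "nat \<Rightarrow> nat \<Rightarrow> nat \<Rightarrow> nat" where
  "beta k m j = (m div 2^(k-j)) mod 2"

definition kdim :: "nat \<Rightarrow> nat" where
  "kdim n = nat \<lceil>log 2 (real n)\<rceil>"

text \<open>number of points beta_k(0..n-1) with x_i < 1/2 (coordinate 0), resp. > 1/2 (coordinate 1)\<close>
definition side0 :: "nat \<Rightarrow> nat \<Rightarrow> nat" where
  "side0 n i = card {m. m < n \<and> beta (kdim n) m i = 0}"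

definition side1 :: "nat \<Rightarrow> nat \<Rightarrow> nat" where
  "side1 n i = card {m. m < n \<and> beta (kdim n) m i = 1}"

definition HCBP :: "nat \<Rightarrow> (nat \<times> nat) set" where
  "HCBP n = {(n0, n1). n = n0 + n1 \<and> n0 \<ge> n1 \<and> n1 \<ge> 1 \<and>
      (\<exists>i\<in>{1..kdim n}. (side0 n i = n0 \<and> side1 n i = n1) \<or> (side0 n i = n1 \<and> side1 n i = n0))}"

definition hh :: "nat \<Rightarrow> nat" where
  "hh n = (if n < 2 then 0 else card (HCBP n))"

definition gterm :: "nat \<Rightarrow> real fps" where
  "gterm i = fps_X ^ (2^(i-1) + 1) * (1 - fps_X ^ (2^i - 1))
              / ((1 - fps_X) * (1 - fps_X ^ (2^(i+1))))"

end

theory Submission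
  imports Defs
begin

lemma dd_Suc: "dd (Suc j) n = 2^j - \<bar>int (n mod 2^Suc j) - 2^j\<bar>"
  by (simp add: dd_def)

lemma two_pow_int: "int (2^j) = 2^j" by simp

lemma dd_bounds: "0 \<le> dd (Suc j) n \<and> dd (Suc j) n \<le> 2^j"
proof -
  have "n mod 2^Suc j < 2^Suc j" by simp
  hence "int (n mod 2^Suc j) < int (2^Suc j)" by linarith
  hence "int (n mod 2^Suc j) < 2 * 2^j" by simp
  thus ?thesis unfolding dd_Suc by linarith
qed

lemma dd_big: assumes "n \<le> 2^j" shows "dd (Suc j) n = int n"
proof -
  have "(2::nat)^j < 2^Suc j" by simp
  hence "n < 2^Suc j" using assms by linarith
  hence "n mod 2^Suc j = n" by simp
  moreover have "int n \<le> 2^j" using assms by (metis of_nat_le_iff of_nat_numeral of_nat_power)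
  ultimately show ?thesis unfolding dd_Suc by linarith
qed

lemma dd_step: "dd (Suc (Suc j)) n = dd (Suc j) n \<or> 2^j < dd (Suc (Suc j)) n"
proof -
  have m: "n mod (2^Suc j * 2) = 2^Suc j * (n div 2^Suc j mod 2) + n mod 2^Suc j"
    by (rule mod_mult2_eq)
  have r: "n mod 2^Suc j < 2^Suc j" by simp
  hence "int (n mod 2^Suc j) < int (2^Suc j)" by linarith
  hence rb: "int (n mod 2^Suc j) < 2 * 2^j" by simp
  have q: "n div 2^Suc j mod 2 = 0 \<or> n div 2^Suc j mod 2 = 1" by auto
  have e: "(2::nat)^Suc (Suc j) = 2^Suc j * 2" by simp
  define r' where "r' = int (n mod 2^Suc j)"
  have r'b: "0 \<le> r'" "r' < 2 * 2^j" using rb by (simp_all add: r'_def)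
  have "n mod 2^Suc (Suc j) = n mod 2^Suc j \<or> n mod 2^Suc (Suc j) = n mod 2^Suc j + 2^Suc j"
    using q unfolding e m by auto
  hence A: "int (n mod 2^Suc (Suc j)) = r' \<or> int (n mod 2^Suc (Suc j)) = r' + 2*2^j"
    unfolding r'_def by auto
  have B: "dd (Suc j) n = 2^j - \<bar>r' - 2^j\<bar>" by (simp add: dd_Suc r'_def)
  have C: "dd (Suc (Suc j)) n = 2*2^j - \<bar>int (n mod 2^Suc (Suc j)) - 2*2^j\<bar>" by (simp add: dd_Suc)
  have "(0::int) < 2^j" by simp
  then show ?thesis using A B C r'b by linarith
qed

lemma dd_mono: "dd (Suc j) n \<le> dd (Suc (Suc j)) n"
  using dd_step[of j n] dd_bounds[of j n] by linarith

lemma dd_strict: "dd (Suc j) n < dd (Suc (Suc j)) n \<longleftrightarrow> 2^j < dd (Suc (Suc j)) n"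
  using dd_step[of j n] dd_bounds[of j n] by linarith

definition ind :: "nat \<Rightarrow> nat \<Rightarrow> real" where
  "ind j n = (if 2^j < n mod 2^Suc (Suc j) \<and> n mod 2^Suc (Suc j) < 3 * 2^j then 1 else 0)"

lemma step1:
  fixes P :: nat assumes P: "P > 0"
  shows "Abs_fps (\<lambda>n. if P < n mod (4*P) \<and> n mod (4*P) < 3 * P then 1 else 0 :: real) * (1 - fps_X^(4*P))
     = Abs_fps (\<lambda>n. if P < n \<and> n < 3 * P then 1 else 0)" (is "?A * _ = ?B")
proof -
  have "?A * (1 - fps_X^(4*P)) = ?A - fps_X^(4*P) * ?A" by (simp add: algebra_simps)
  also have "\<dots> = ?B"
  proof (rule fps_ext)
    fix n
    show "fps_nth (?A - fps_X^(4*P) * ?A) n = fps_nth ?B n"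
    proof (cases "n < 4*P")
      case True
      then show ?thesis by (simp add: fps_X_power_mult_nth)
    next
      case False
      hence "(n - 4*P) mod (4*P) = n mod (4*P)" by (simp add: mod_if)
      then show ?thesis using False by (simp add: fps_X_power_mult_nth)
    qed
  qed
  finally show ?thesis .
qed

lemma step2:
  fixes P :: nat assumes P: "P > 0"
  shows "Abs_fps (\<lambda>n. if P < n \<and> n < 3 * P then 1 else 0 :: real) * (1 - fps_X)
     = fps_X^(P+1) * (1 - fps_X^(2*P - 1))" (is "?B * _ = _")
proof -
  have "?B * (1 - fps_X) = ?B - fps_X^1 * ?B" by (simp add: algebra_simps)
  moreover have "fps_X^(P+1) * (1 - fps_X^(2*P - 1)) = fps_X^(P+1) - fps_X^(3*P) * (1::real fps)"
  proof -
    have "P + 1 + (2*P - 1) = 3 * P" using P by simp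
    have "fps_X^(P+1) * fps_X^(2*P - 1) = (fps_X^(P+1+(2*P - 1)) :: real fps)" by (simp only: power_add)
    hence "fps_X^(P+1) * fps_X^(2*P - 1) = (fps_X^(3*P) :: real fps)" using \<open>P + 1 + (2*P - 1) = 3 * P\<close> by (simp only:)
    thus ?thesis by (simp add: algebra_simps)
  qed
  moreover have "?B - fps_X^1 * ?B = fps_X^(P+1) - fps_X^(3*P) * (1::real fps)"
  proof (rule fps_ext)
    fix n
    show "fps_nth (?B - fps_X^1 * ?B) n = fps_nth (fps_X^(P+1) - fps_X^(3*P) * (1::real fps)) n"
      using P unfolding fps_sub_nth fps_X_power_mult_nth by (auto simp: fps_X_power_nth)
  qed
  ultimately show ?thesis by simp
qed

lemma gterm_eq: "gterm (Suc j) = Abs_fps (ind j)"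
proof -
  define P :: nat where "P = 2^j"
  have P: "P > 0" by (simp add: P_def)
  have e1: "(2::nat)^Suc (Suc j) = 4 * P" "(2::nat)^Suc j = 2 * P" by (simp_all add: P_def)
  have A: "Abs_fps (ind j) = Abs_fps (\<lambda>n. if P < n mod (4*P) \<and> n mod (4*P) < 3 * P then 1 else 0 :: real)"
    unfolding ind_def e1 P_def by simp
  have nz: "(1 - fps_X) * (1 - fps_X ^ (4*P)) \<noteq> (0::real fps)"
  proof -
    have "fps_nth ((1 - fps_X) * (1 - fps_X ^ (4*P)) :: real fps) 0 = 1" using P by simp
    thus ?thesis by (metis fps_zero_nth zero_neq_one)
  qed
  have "Abs_fps (ind j) * ((1 - fps_X) * (1 - fps_X ^ (4*P))) = fps_X^(P+1) * (1 - fps_X^(2*P - 1))"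
  proof -
    have "Abs_fps (ind j) * ((1 - fps_X) * (1 - fps_X ^ (4*P))) = (Abs_fps (ind j) * (1 - fps_X ^ (4*P))) * (1 - fps_X)"
      by (simp only: ac_simps)
    also have "\<dots> = fps_X^(P+1) * (1 - fps_X^(2*P - 1))" unfolding A step1[OF P] step2[OF P] ..
    finally show ?thesis .
  qed
  hence "gterm (Suc j) = Abs_fps (ind j) * ((1 - fps_X) * (1 - fps_X ^ (4*P))) / ((1 - fps_X) * (1 - fps_X ^ (4*P)))"
    unfolding gterm_def e1 P_def by simp
  also have "\<dots> = Abs_fps (ind j)" using nz by simp
  finally show ?thesis .
qed

lemma ind_zero: assumes "n \<le> j" shows "ind j n = 0"
proof -
  have "n < 2^j" using assms less_exp[of j] by linarith
  hence "n mod 2^Suc (Suc j) \<le> 2^j" by (meson less_imp_le mod_less_eq_dividend order.trans)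
  thus ?thesis unfolding ind_def by auto
qed

lemma gsums: "(\<lambda>j. gterm (Suc j)) sums Abs_fps (\<lambda>n. \<Sum>j<n. ind j n)"
  unfolding sums_def gterm_eq
proof (rule tendsto_fpsI)
  fix n
  show "\<forall>\<^sub>F N in sequentially. fps_nth (\<Sum>j<N. Abs_fps (ind j)) n = fps_nth (Abs_fps (\<lambda>n. \<Sum>j<n. ind j n)) n"
    unfolding eventually_sequentially
  proof (intro exI allI impI)
    fix N assume "n \<le> N"
    hence "(\<Sum>j<N. ind j n) = (\<Sum>j<n. ind j n)"
      by (intro sum.mono_neutral_right) (auto simp: ind_zero)
    thus "fps_nth (\<Sum>j<N. Abs_fps (ind j)) n = fps_nth (Abs_fps (\<lambda>n. \<Sum>j<n. ind j n)) n"
      by (simp add: fps_sum_nth)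
  qed
qed

lemma ind_dd: "ind j n = (if 2^j < dd (Suc (Suc j)) n then 1 else 0)"
proof -
  define P :: int where "P = 2^j"
  define r where "r = int (n mod 2^Suc (Suc j))"
  have "n mod 2^Suc (Suc j) < 2^Suc (Suc j)" by simp
  hence "int (n mod 2^Suc (Suc j)) < int (2^Suc (Suc j))" by linarith
  hence rb: "r < 4 * P" "0 \<le> r" by (simp_all add: r_def P_def)
  have D: "dd (Suc (Suc j)) n = 2*P - \<bar>r - 2*P\<bar>" by (simp add: dd_Suc r_def P_def)
  have "(2^j < n mod 2^Suc (Suc j) \<and> n mod 2^Suc (Suc j) < 3 * 2^j) \<longleftrightarrow> (P < r \<and> r < 3 * P)"
    unfolding r_def P_def by (metis (no_types, opaque_lifting) of_nat_less_iff of_nat_mult of_nat_numeral of_nat_power)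
  also have "\<dots> \<longleftrightarrow> P < dd (Suc (Suc j)) n" unfolding D by linarith
  finally show ?thesis unfolding ind_def P_def by simp
qed

definition SS :: "nat \<Rightarrow> nat set" where
  "SS n = {j. j < n \<and> 2^j < dd (Suc (Suc j)) n}"

lemma sum_ind: "(\<Sum>j<n. ind j n) = real (card (SS n))"
proof -
  have "(\<Sum>j<n. ind j n) = (\<Sum>j\<in>{..<n}. if j \<in> SS n then 1 else 0)"
    by (intro sum.cong) (auto simp: ind_dd SS_def)
  also have "\<dots> = real (card ({..<n} \<inter> SS n))" by (simp add: sum.If_cases)
  also have "{..<n} \<inter> SS n = SS n" by (auto simp: SS_def)
  finally show ?thesis .
qed

lemma card_mono_seq:
  fixes f :: "nat \<Rightarrow> int" assumes mono: "\<And>j. f j \<le> f (Suc j)"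
  shows "card (f ` {..M}) = 1 + card {j. j < M \<and> f j < f (Suc j)}"
proof (induction M)
  case 0 then show ?case by simp
next
  case (Suc M)
  have im: "f ` {..Suc M} = insert (f (Suc M)) (f ` {..M})" by (auto simp: atMost_Suc)
  show ?case
  proof (cases "f M < f (Suc M)")
    case True
    have "\<forall>i\<le>M. f i \<le> f M" using lift_Suc_mono_le[of f, OF mono] by blast
    hence "f (Suc M) \<notin> f ` {..M}" using True by force
    hence "card (f ` {..Suc M}) = Suc (card (f ` {..M}))" unfolding im by simp
    moreover have "{j. j < Suc M \<and> f j < f (Suc j)} = insert M {j. j < M \<and> f j < f (Suc j)}"
      using True by auto
    moreover have "M \<notin> {j. j < M \<and> f j < f (Suc j)}" by simp
    ultimately show ?thesis using Suc by simp
  next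
    case False
    hence "f (Suc M) = f M" using mono[of M] by simp
    hence "f ` {..Suc M} = f ` {..M}" unfolding im by auto
    moreover have "{j. j < Suc M \<and> f j < f (Suc j)} = {j. j < M \<and> f j < f (Suc j)}"
      using False less_Suc_eq by auto
    ultimately show ?thesis using Suc by simp
  qed
qed

lemma dd_set: "{dd i n | i. i \<ge> 1} = (\<lambda>j. dd (Suc j) n) ` {..n}"
proof -
  have big: "dd (Suc j) n = int n" if "n \<le> j" for j
  proof -
    have "n \<le> 2^j" using that less_exp[of j] by linarith
    thus ?thesis by (rule dd_big)
  qed
  show ?thesis
  proof (intro equalityI subsetI)
    fix x assume "x \<in> {dd i n | i. i \<ge> 1}"
    then obtain i where x: "x = dd i n" and "1 \<le> i" by auto
    then obtain j where i: "i = Suc j" by (cases i) auto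
    show "x \<in> (\<lambda>j. dd (Suc j) n) ` {..n}"
    proof (cases "j \<le> n")
      case True thus ?thesis unfolding x i by auto
    next
      case False
      hence "dd i n = dd (Suc n) n" unfolding i using big[of j] big[of n] by simp
      thus ?thesis unfolding x by auto
    qed
  next
    fix x assume "x \<in> (\<lambda>j. dd (Suc j) n) ` {..n}"
    thus "x \<in> {dd i n | i. i \<ge> 1}" by force
  qed
qed

lemma cc_eq: "cc n = 1 + card (SS n)"
proof -
  have "cc n = card ((\<lambda>j. dd (Suc j) n) ` {..n})" unfolding cc_def dd_set ..
  also have "\<dots> = 1 + card {j. j < n \<and> dd (Suc j) n < dd (Suc (Suc j)) n}"
    using card_mono_seq[of "\<lambda>j. dd (Suc j) n", OF dd_mono] by simp
  also have "{j. j < n \<and> dd (Suc j) n < dd (Suc (Suc j)) n} = SS n"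
    unfolding SS_def using dd_strict by auto
  finally show ?thesis .
qed

lemma kdim_props:
  assumes n: "n \<ge> 2"
  shows "kdim n \<ge> 1" "n \<le> 2^kdim n" "2^(kdim n - 1) < n"
proof -
  define L where "L = log 2 (real n)"
  have Lpos: "L > 0" unfolding L_def using n by simp
  have kL: "real (kdim n) = of_int \<lceil>L\<rceil>" unfolding kdim_def L_def
    using Lpos L_def by (simp add: order.strict_implies_order)
  have c: "of_int \<lceil>L\<rceil> - 1 < L \<and> L \<le> of_int \<lceil>L\<rceil>" by (rule ceiling_correct)
  show k1: "kdim n \<ge> 1" using kL c Lpos by linarith
  show "n \<le> 2^kdim n"
  proof (rule ccontr)
    assume "\<not> n \<le> 2^kdim n"
    hence "(2::nat)^kdim n < n" by simp
    hence "real (kdim n) < L" unfolding L_def using less_log_of_power[of 2 "kdim n" n] by simp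
    thus False using kL c by linarith
  qed
  show "2^(kdim n - 1) < n"
  proof (rule ccontr)
    assume "\<not> 2^(kdim n - 1) < n"
    hence "n \<le> (2::nat)^(kdim n - 1)" by simp
    hence "L \<le> real (kdim n - 1)" unfolding L_def using log_of_power_le[of n 2 "kdim n - 1"] n by simp
    thus False using kL c k1 by simp
  qed
qed

definition ZZ :: "nat \<Rightarrow> nat \<Rightarrow> nat" where
  "ZZ b n = card {m. m < n \<and> (m div 2^b) mod 2 = 0}"
definition WW :: "nat \<Rightarrow> nat \<Rightarrow> nat" where
  "WW b n = card {m. m < n \<and> (m div 2^b) mod 2 = 1}"

lemma card_less_Suc: "card {m. m < Suc n \<and> Q m} = card {m. m < n \<and> Q m} + (if Q n then 1 else 0)"
proof -
  have "{m. m < Suc n \<and> Q m} = {m. m < n \<and> Q m} \<union> (if Q n then {n} else {})" by (auto simp: less_Suc_eq)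
  moreover have "finite {m. m < n \<and> Q m}" by simp
  ultimately show ?thesis by auto
qed

lemma dd_incr: "dd (Suc b) (Suc n) = dd (Suc b) n + (if (n div 2^b) mod 2 = 0 then 1 else -1)"
proof -
  define P :: nat where "P = 2^b"
  have P: "P > 0" by (simp add: P_def)
  have e: "(2::nat)^Suc b = P * 2" by (simp add: P_def)
  have m: "n mod (P * 2) = P * (n div P mod 2) + n mod P" by (rule mod_mult2_eq)
  have q: "n div P mod 2 = 0 \<or> n div P mod 2 = 1" by auto
  have rP: "n mod P < P" using P by simp
  have ms: "Suc n mod (P*2) = (if Suc (n mod (P*2)) = P*2 then 0 else Suc (n mod (P*2)))" by (rule mod_Suc)
  have lt: "n mod (P*2) < P * 2" using P by simp
  have D1: "dd (Suc b) n = int P - \<bar>int (n mod (P*2)) - int P\<bar>" by (simp add: dd_Suc e P_def mult.commute)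
  have D2: "dd (Suc b) (Suc n) = int P - \<bar>int (Suc n mod (P*2)) - int P\<bar>" by (simp add: dd_Suc e P_def mult.commute)
  show ?thesis
  proof (cases "n div P mod 2 = 0")
    case True
    hence "n mod (P*2) = n mod P" using m by simp
    hence "Suc n mod (P*2) = Suc (n mod (P*2))" "n mod (P*2) < P" using ms rP by auto
    hence "int (Suc n mod (P*2)) = int (n mod (P*2)) + 1" "int (n mod (P*2)) < int P" by simp_all
    hence "dd (Suc b) (Suc n) = dd (Suc b) n + 1" using D1 D2 by linarith
    thus ?thesis using True unfolding P_def by simp
  next
    case False
    hence F: "n div P mod 2 = 1" using q by simp
    hence "n mod (P*2) = P + n mod P" using m by simp
    hence "P \<le> n mod (P*2)" by simp
    moreover have "int (Suc n mod (P*2)) = int (n mod (P*2)) + 1 - (if Suc (n mod (P*2)) = P*2 then int P * 2 else 0)"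
      using ms by auto
    ultimately have "dd (Suc b) (Suc n) = dd (Suc b) n - 1" using D1 D2 lt by (auto split: if_splits)
    thus ?thesis using False unfolding P_def by simp
  qed
qed

lemma ZO: "ZZ b n + WW b n = n \<and> int (ZZ b n) - int (WW b n) = dd (Suc b) n"
proof (induction n)
  case 0 then show ?case by (simp add: ZZ_def WW_def dd_def)
next
  case (Suc n)
  have q: "n div 2^b mod 2 = 0 \<or> n div 2^b mod 2 = 1" by auto
  show ?case
    unfolding ZZ_def WW_def card_less_Suc dd_incr
    using Suc q unfolding ZZ_def WW_def by auto
qed

lemma side_ZW: "side0 n i = ZZ (kdim n - i) n" "side1 n i = WW (kdim n - i) n"
  by (simp_all add: side0_def side1_def ZZ_def WW_def beta_def)

lemma hh_eq: assumes n: "n \<ge> 2" shows "hh n = card (SS n)"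
proof -
  define k where "k = kdim n"
  have k1: "k \<ge> 1" and nk: "n \<le> 2^k" and kn: "2^(k-1) < n" using kdim_props[OF n] by (simp_all add: k_def)
  define F where "F i = (side0 n i, side1 n i)" for i
  define D where "D i = dd (Suc (k - i)) n" for i
  have sd: "side0 n i + side1 n i = n \<and> int (side0 n i) - int (side1 n i) = D i" for i
    using ZO[of "k - i" n] unfolding side_ZW D_def k_def by simp
  have Dbnd: "0 \<le> D i \<and> D i < int n" if "i \<in> {1..k}" for i
  proof -
    have "(2::nat)^(k-i) \<le> 2^(k-1)" using that by (intro power_increasing) auto
    hence "(2::nat)^(k-i) < n" using kn by linarith
    hence "(2::int)^(k-i) < int n" by (metis of_nat_less_iff of_nat_numeral of_nat_power)
    thus ?thesis using dd_bounds[of "k - i" n] unfolding D_def by linarith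
  qed
  have H: "HCBP n = F ` {1..k}"
  proof (intro equalityI subsetI)
    fix p assume "p \<in> HCBP n"
    then obtain n0 n1 i where p: "p = (n0, n1)" and c: "n = n0 + n1" "n0 \<ge> n1" "n1 \<ge> 1" and i: "i \<in> {1..k}"
      and s: "(side0 n i = n0 \<and> side1 n i = n1) \<or> (side0 n i = n1 \<and> side1 n i = n0)"
      unfolding HCBP_def k_def by blast
    have "F i = p" using s sd[of i] Dbnd[OF i] c unfolding F_def p by auto
    thus "p \<in> F ` {1..k}" using i by blast
  next
    fix p assume "p \<in> F ` {1..k}"
    then obtain i where i: "i \<in> {1..k}" and p: "p = F i" by blast
    show "p \<in> HCBP n" unfolding HCBP_def p F_def using i sd[of i] Dbnd[OF i] unfolding k_def
      by auto
  qed
  let ?G = "\<lambda>p. int (fst p) - int (snd p)"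
  have inj: "inj_on ?G (F ` {1..k})"
  proof (rule inj_onI)
    fix p q assume "p \<in> F ` {1..k}" "q \<in> F ` {1..k}" "?G p = ?G q"
    then obtain i j where "p = F i" "q = F j" "?G (F i) = ?G (F j)" by blast
    thus "p = q" using sd[of i] sd[of j] unfolding F_def by (simp add: prod_eq_iff)
  qed
  have GF: "?G ` (F ` {1..k}) = D ` {1..k}" using sd unfolding F_def by (auto simp: image_image)
  have hhD: "hh n = card (D ` {1..k})"
    unfolding hh_def using n H card_image[OF inj] GF by simp
  have DI: "D ` {1..k} = (\<lambda>b. dd (Suc b) n) ` {..<k}"
  proof (intro equalityI subsetI)
    fix x assume "x \<in> D ` {1..k}"
    thus "x \<in> (\<lambda>b. dd (Suc b) n) ` {..<k}" unfolding D_def by auto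
  next
    fix x assume "x \<in> (\<lambda>b. dd (Suc b) n) ` {..<k}"
    then obtain b where b: "b < k" "x = dd (Suc b) n" by blast
    hence "D (k - b) = x" "k - b \<in> {1..k}" unfolding D_def by auto
    thus "x \<in> D ` {1..k}" by (metis imageI)
  qed
  have kle: "k \<le> n" using kn less_exp[of "k - 1"] k1 by linarith
  have big: "dd (Suc j) n = int n" if "k \<le> j" for j
  proof -
    have "(2::nat)^k \<le> 2^j" using that by (intro power_increasing) auto
    thus ?thesis using nk by (intro dd_big) linarith
  qed
  have ins: "(\<lambda>j. dd (Suc j) n) ` {..n} = insert (int n) ((\<lambda>b. dd (Suc b) n) ` {..<k})"
  proof (intro equalityI subsetI)
    fix x assume "x \<in> (\<lambda>j. dd (Suc j) n) ` {..n}"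
    then obtain j where j: "j \<le> n" "x = dd (Suc j) n" by blast
    show "x \<in> insert (int n) ((\<lambda>b. dd (Suc b) n) ` {..<k})"
    proof (cases "j < k")
      case True thus ?thesis using j by auto
    next
      case False thus ?thesis using j big[of j] by auto
    qed
  next
    fix x assume x: "x \<in> insert (int n) ((\<lambda>b. dd (Suc b) n) ` {..<k})"
    show "x \<in> (\<lambda>j. dd (Suc j) n) ` {..n}"
    proof (cases "x = int n")
      case True
      hence "x = dd (Suc n) n" using big[of n] kle by simp
      thus ?thesis by auto
    next
      case False thus ?thesis using x kle by auto
    qed
  qed
  have notin: "int n \<notin> (\<lambda>b. dd (Suc b) n) ` {..<k}"
  proof
    assume "int n \<in> (\<lambda>b. dd (Suc b) n) ` {..<k}"
    then obtain b where "b < k" "int n = dd (Suc b) n" by blast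
    hence "D (k - b) = int n" "k - b \<in> {1..k}" unfolding D_def by auto
    thus False using Dbnd by force
  qed
  have "cc n = card ((\<lambda>j. dd (Suc j) n) ` {..n})" unfolding cc_def dd_set ..
  also have "\<dots> = Suc (card ((\<lambda>b. dd (Suc b) n) ` {..<k}))" unfolding ins using notin by simp
  finally show ?thesis using cc_eq[of n] hhD DI by simp
qed

lemma hh_eq_all: "hh n = card (SS n)"
proof (cases "n \<ge> 2")
  case True thus ?thesis by (rule hh_eq)
next
  case False
  hence "n = 0 \<or> n = 1" by auto
  moreover have "SS 0 = {}" by (simp add: SS_def)
  moreover have "SS 1 = {}" by (auto simp: SS_def dd_def)
  ultimately show ?thesis by (auto simp: hh_def)
qed

theorem theorem15:
  shows "summable (\<lambda>j. gterm (Suc j))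
     \<and> Abs_fps (\<lambda>n. real (cc n)) = 1 / (1 - fps_X) + (\<Sum>j. gterm (Suc j))
     \<and> Abs_fps (\<lambda>n. real (hh n)) = (\<Sum>j. gterm (Suc j))"
proof -
  have s: "(\<Sum>j. gterm (Suc j)) = Abs_fps (\<lambda>n. \<Sum>j<n. ind j n)" using gsums by (rule sums_unique[symmetric])
  have h: "Abs_fps (\<lambda>n. real (hh n)) = Abs_fps (\<lambda>n. \<Sum>j<n. ind j n)"
    by (simp add: sum_ind hh_eq_all)
  have one: "1 / (1 - fps_X) = (Abs_fps (\<lambda>n. 1) :: real fps)"
    using fps_inverse_one_minus_fps_X by (simp add: fps_divide_unit)
  have c: "Abs_fps (\<lambda>n. real (cc n)) = Abs_fps (\<lambda>n. 1) + Abs_fps (\<lambda>n. \<Sum>j<n. ind j n)"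
    by (simp add: fps_eq_iff sum_ind cc_eq)
  show ?thesis using gsums s h one c by (auto simp: sums_iff)
qed

end
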